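(* Let $(X,\rho)$ be a compact metric space of diameter $d$ and let $\mu$ be a nondegenerate Borel probability measure on $X$. Then for every $\varepsilon>0$, $$H_{\rho,(d+1)\varepsilon}(\mu)\le H'_{\rho,\varepsilon}(\mu).$$
   Context: For a Borel probability measure $\mu$ on a metric space $(X,\rho)$: $H_{\rho,\varepsilon}(\mu)=\inf\{H(\nu): k_\rho(\nu,\mu)<\varepsilon\}$, where $\nu$ ranges over discrete probability measures $\nu=\sum_i c_i\delta_{x_i}$ with finite entropy $H(\nu)=-\sum_i c_i\ln c_i$, and $k_\rho$ is the Kantorovich (Monge–Kantorovich transportation, Wasserstein-1) metric on Borel probability measures on $(X,\rho)$. Also $H'_{\rho,\varepsilon}(\mu)=\min\{\ln k: \exists X'\subset X,\ \mu(X')>1-\varepsilon,\ \exists x_1,\dots,x_k \text{ with } X'\subset\bigcup_{i=1}^kV_\varepsilon(x_i)\}$, where $V_\varepsilon(x)$ is the $\rho$-ball of radius $\varepsilon$ centered at $x$. Nondegenerate means every nonempty open set has positive measure. *)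

theory Defs
  imports "HOL-Probability.Probability"
begin

text \<open>A discrete probability measure \<nu> = sum c_i delta_{x_i} is represented by a pmf p;
  its Borel version is the pushforward of measure_pmf p onto the Borel sigma-algebra.\<close>
definition pmf_to_borel :: "'a::metric_space pmf \<Rightarrow> 'a measure" where
  "pmf_to_borel p = distr (measure_pmf p) borel (\<lambda>x. x)"

definition pmf_entropy_finite :: "'a pmf \<Rightarrow> bool" where
  "pmf_entropy_finite p \<longleftrightarrow> (\<lambda>x. - pmf p x * ln (pmf p x)) summable_on set_pmf p"

definition pmf_entropy :: "'a pmf \<Rightarrow> real" where
  "pmf_entropy p = infsum (\<lambda>x. - pmf p x * ln (pmf p x)) (set_pmf p)"

definition couplings :: "'a::metric_space measure \<Rightarrow> 'a measure \<Rightarrow> ('a \<times> 'a) measure set" where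
  "couplings \<nu> \<mu> = {\<gamma>. sets \<gamma> = sets borel \<and> distr \<gamma> borel fst = \<nu> \<and> distr \<gamma> borel snd = \<mu>}"

definition kantorovich :: "'a::metric_space measure \<Rightarrow> 'a measure \<Rightarrow> ennreal" where
  "kantorovich \<nu> \<mu> = (INF \<gamma> \<in> couplings \<nu> \<mu>. \<integral>\<^sup>+ z. ennreal (dist (fst z) (snd z)) \<partial>\<gamma>)"

definition H_eps :: "'a::metric_space measure \<Rightarrow> real \<Rightarrow> ereal" where
  "H_eps \<mu> \<epsilon> = (INF p \<in> {p. pmf_entropy_finite p \<and> kantorovich (pmf_to_borel p) \<mu> < ennreal \<epsilon>}.
                    ereal (pmf_entropy p))"

definition H'_eps :: "'a::metric_space measure \<Rightarrow> real \<Rightarrow> ereal" where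
  "H'_eps \<mu> \<epsilon> = (INF k \<in> {k::nat. k \<ge> 1 \<and> (\<exists>X' \<in> sets \<mu>. measure \<mu> X' > 1 - \<epsilon> \<and>
                    (\<exists>x :: nat \<Rightarrow> 'a. X' \<subseteq> (\<Union>i<k. ball (x i) \<epsilon>)))}. ereal (ln (real k)))"

definition nondegenerate :: "'a::topological_space measure \<Rightarrow> bool" where
  "nondegenerate \<mu> \<longleftrightarrow> (\<forall>U. open U \<and> U \<noteq> {} \<longrightarrow> emeasure \<mu> U > 0)"

end

theory Submission
  imports Defs
begin

lemma entropy_bound:
  fixes p :: "'a pmf" and k :: nat
  assumes fin: "finite (set_pmf p)" and ck: "card (set_pmf p) \<le> k"
  shows "pmf_entropy_finite p \<and> pmf_entropy p \<le> ln (real k)"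
proof -
  let ?S = "set_pmf p"
  have S1: "sum (pmf p) ?S = 1" using sum_pmf_eq_1[OF fin] by simp
  have ne: "?S \<noteq> {}" by (simp add: set_pmf_not_empty)
  then have cpos: "card ?S > 0" using fin by (simp add: card_gt_0_iff)
  then have kpos: "real k > 0" using ck by linarith
  have pos: "\<And>y. y \<in> ?S \<Longrightarrow> pmf p y > 0" by (simp add: set_pmf_eq')
  have "(\<Sum>y\<in>?S. pmf p y * ln (1 / (real k * pmf p y))) \<le> (\<Sum>y\<in>?S. pmf p y * (1 / (real k * pmf p y) - 1))"
    by (intro sum_mono mult_left_mono ln_le_minus_one) (use pos kpos in \<open>auto intro: mult_pos_pos less_imp_le\<close>)
  also have "\<dots> = (\<Sum>y\<in>?S. 1 / real k - pmf p y)"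
  proof (intro sum.cong refl)
    fix y assume "y \<in> ?S"
    then have "pmf p y > 0" by (rule pos)
    then show "pmf p y * (1 / (real k * pmf p y) - 1) = 1 / real k - pmf p y"
      using kpos by (simp add: field_simps)
  qed
  also have "\<dots> = real (card ?S) / real k - 1" using S1 by (simp add: sum_subtractf)
  also have "\<dots> \<le> 0" using ck kpos by (simp add: divide_le_eq_1)
  finally have A: "(\<Sum>y\<in>?S. pmf p y * ln (1 / (real k * pmf p y))) \<le> 0" .
  have "(\<Sum>y\<in>?S. pmf p y * ln (1 / (real k * pmf p y))) = (\<Sum>y\<in>?S. - pmf p y * ln (pmf p y) - ln (real k) * pmf p y)"
  proof (intro sum.cong refl)
    fix y assume "y \<in> ?S"
    then have "pmf p y > 0" by (rule pos)
    then show "pmf p y * ln (1 / (real k * pmf p y)) = - pmf p y * ln (pmf p y) - ln (real k) * pmf p y"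
      using kpos by (simp add: ln_div ln_mult algebra_simps)
  qed
  also have "\<dots> = (\<Sum>y\<in>?S. - pmf p y * ln (pmf p y)) - ln (real k) * sum (pmf p) ?S"
    by (simp add: sum_subtractf sum_distrib_left)
  finally have B: "(\<Sum>y\<in>?S. pmf p y * ln (1 / (real k * pmf p y))) = (\<Sum>y\<in>?S. - pmf p y * ln (pmf p y)) - ln (real k) * sum (pmf p) ?S" .
  from B A S1 have "(\<Sum>y\<in>?S. - pmf p y * ln (pmf p y)) \<le> ln (real k)" by simp
  then show ?thesis using fin unfolding pmf_entropy_finite_def pmf_entropy_def by simp
qed

theorem lemma3:
  fixes \<mu> :: "'a::metric_space measure" and \<epsilon> :: real
  assumes "compact (UNIV :: 'a set)"
    and "prob_space \<mu>" and "sets \<mu> = sets borel"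
    and "nondegenerate \<mu>"
    and "\<epsilon> > 0"
  shows "H_eps \<mu> ((diameter (UNIV :: 'a set) + 1) * \<epsilon>) \<le> H'_eps \<mu> \<epsilon>"
  unfolding H'_eps_def
proof (rule INF_greatest)
  fix k assume "k \<in> {k::nat. k \<ge> 1 \<and> (\<exists>X' \<in> sets \<mu>. measure \<mu> X' > 1 - \<epsilon> \<and>
                    (\<exists>x :: nat \<Rightarrow> 'a. X' \<subseteq> (\<Union>i<k. ball (x i) \<epsilon>)))}"
  then obtain X' x where k1: "k \<ge> 1" and X'm: "X' \<in> sets \<mu>" and X'meas: "measure \<mu> X' > 1 - \<epsilon>"
    and cov: "X' \<subseteq> (\<Union>i<k. ball (x i) \<epsilon>)" by blast
  interpret P: prob_space \<mu> by fact
  define d where "d = diameter (UNIV :: 'a set)"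
  have bnd: "bounded (UNIV :: 'a set)" using assms(1) compact_imp_bounded by blast
  have dge: "d \<ge> 0" unfolding d_def using diameter_ge_0[OF bnd] .
  have dist_d: "\<And>a b::'a. dist a b \<le> d" unfolding d_def using diameter_bounded_bound[OF bnd] by blast
  have sp: "space \<mu> = UNIV" using sets_eq_imp_space_eq[OF assms(3)] by simp
  have ballm: "\<And>c r. ball c r \<in> sets \<mu>" using assms(3) by simp
  define g where "g z = (if z \<in> X' then (LEAST i. z \<in> ball (x i) \<epsilon>) else 0)" for z
  define f where "f z = x (g z)" for z
  have gk: "g z < k" for z
  proof (cases "z \<in> X'")
    case True
    then obtain i where "i < k" "z \<in> ball (x i) \<epsilon>" using cov by blast
    then have "(LEAST i. z \<in> ball (x i) \<epsilon>) \<le> i" by (intro Least_le)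
    then show ?thesis using True \<open>i < k\<close> unfolding g_def by simp
  next
    case False then show ?thesis using k1 unfolding g_def by simp
  qed
  have fX': "dist (f z) z < \<epsilon>" if zX: "z \<in> X'" for z
  proof -
    obtain i where "i < k" "z \<in> ball (x i) \<epsilon>" using cov zX by blast
    then have "z \<in> ball (x (LEAST i. z \<in> ball (x i) \<epsilon>)) \<epsilon>" by (intro LeastI)
    then show ?thesis using zX unfolding f_def g_def by simp
  qed
  have gm: "g \<in> measurable \<mu> (count_space UNIV)"
    unfolding g_def
  proof (rule measurable_If_set)
    have "\<And>i. (\<lambda>z. z \<in> ball (x i) \<epsilon>) \<in> measurable \<mu> (count_space UNIV)"
      using ballm by (simp add: pred_def sp ball_def)
    then show "(\<lambda>z. LEAST i. z \<in> ball (x i) \<epsilon>) \<in> measurable \<mu> (count_space UNIV)"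
      by (rule measurable_Least)
  qed (auto simp: X'm sp)
  have fm: "f \<in> measurable \<mu> (count_space UNIV)"
    unfolding f_def by (rule measurable_compose[OF gm]) (simp add: measurable_count_space)
  have fbm: "f \<in> borel_measurable \<mu>"
    using measurable_compose[OF fm, of "\<lambda>y. y" borel] by (simp add: measurable_count_space)
  define S where "S = x ` {..<k}"
  have finS: "finite S" unfolding S_def by simp
  have fS: "f z \<in> S" for z unfolding S_def f_def using gk by blast
  define N where "N = distr \<mu> (count_space UNIV) f"
  have probN: "prob_space N" unfolding N_def by (rule P.prob_space_distr[OF fm])
  have setsN: "sets N = UNIV" unfolding N_def by simp
  have aeS: "AE y in N. y \<in> S" unfolding N_def
    by (subst AE_distr_iff[OF fm]) (auto simp: fS)
  have aeN: "AE y in N. measure N {y} \<noteq> 0"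
  proof -
    interpret PN: prob_space N by fact
    show ?thesis using PN.AE_support_countable[OF setsN] aeS finS countable_finite by blast
  qed
  define p where "p = Abs_pmf N"
  have pN: "measure_pmf p = N" unfolding p_def
    by (rule Abs_pmf_inverse) (use probN setsN aeN in auto)
  have setp: "set_pmf p \<subseteq> S" using aeS unfolding pN[symmetric] AE_measure_pmf_iff by blast
  have finp: "finite (set_pmf p)" using setp finS finite_subset by blast
  have "card (set_pmf p) \<le> card S" using setp finS by (rule card_mono[rotated])
  also have "card S \<le> k" unfolding S_def using card_image_le[of "{..<k}" x] by simp
  finally have ent: "pmf_entropy_finite p \<and> pmf_entropy p \<le> ln (real k)"
    using entropy_bound[OF finp] by blast
  have ptb: "pmf_to_borel p = distr \<mu> borel f"
    unfolding pmf_to_borel_def pN N_def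
    by (subst distr_distr) (auto simp: measurable_count_space fm comp_def)
  define h where "h z = (f z, z)" for z
  have hm: "h \<in> borel_measurable \<mu>"
  proof (rule borel_measurableI)
    fix U :: "('a \<times> 'a) set" assume U: "open U"
    have "h -` U \<inter> space \<mu> = (\<Union>y\<in>S. (f -` {y} \<inter> space \<mu>) \<inter> (Pair y -` U))"
      unfolding h_def using fS by auto
    also have "\<dots> \<in> sets \<mu>"
    proof (rule sets.finite_UN[OF finS])
      fix y
      have 1: "f -` {y} \<inter> space \<mu> \<in> sets \<mu>" using fm by (simp add: measurable_sets)
      have "open (Pair y -` U)"
        by (rule open_vimage[OF U]) (intro continuous_intros)
      then have 2: "Pair y -` U \<in> sets \<mu>" using assms(3) by simp
      show "(f -` {y} \<inter> space \<mu>) \<inter> (Pair y -` U) \<in> sets \<mu>" using 1 2 by (rule sets.Int)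
    qed
    finally show "h -` U \<inter> space \<mu> \<in> sets \<mu>" .
  qed
  define \<gamma> where "\<gamma> = distr \<mu> borel h"
  have fstm: "fst \<in> borel_measurable (borel :: ('a\<times>'a) measure)"
    by (intro borel_measurable_continuous_onI continuous_intros)
  have sndm: "snd \<in> borel_measurable (borel :: ('a\<times>'a) measure)"
    by (intro borel_measurable_continuous_onI continuous_intros)
  have cp: "\<gamma> \<in> couplings (pmf_to_borel p) \<mu>"
    unfolding couplings_def
  proof (intro CollectI conjI)
    show "sets \<gamma> = sets borel" unfolding \<gamma>_def by simp
    show "distr \<gamma> borel fst = pmf_to_borel p" unfolding \<gamma>_def ptb
      by (subst distr_distr[OF fstm hm]) (simp add: comp_def h_def)
    have "distr \<gamma> borel snd = distr \<mu> borel (\<lambda>z. z)" unfolding \<gamma>_def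
      by (subst distr_distr[OF sndm hm]) (simp add: comp_def h_def)
    also have "\<dots> = \<mu>" by (rule distr_id2) (simp add: assms(3))
    finally show "distr \<gamma> borel snd = \<mu>" .
  qed
  have distm: "(\<lambda>z. ennreal (dist (fst z) (snd z))) \<in> borel_measurable (borel :: ('a\<times>'a) measure)"
  proof -
    have "(\<lambda>z::'a\<times>'a. dist (fst z) (snd z)) \<in> borel_measurable borel"
      by (intro borel_measurable_continuous_onI continuous_intros)
    then show ?thesis by measurable
  qed
  have "kantorovich (pmf_to_borel p) \<mu> \<le> (\<integral>\<^sup>+ z. ennreal (dist (fst z) (snd z)) \<partial>\<gamma>)"
    unfolding kantorovich_def using cp by (rule INF_lower)
  also have "\<dots> = (\<integral>\<^sup>+ z. ennreal (dist (f z) z) \<partial>\<mu>)"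
    unfolding \<gamma>_def by (subst nn_integral_distr[OF hm]) (use distm in \<open>simp_all add: h_def\<close>)
  also have "\<dots> < ennreal ((d + 1) * \<epsilon>)"
  proof (cases "d = 0")
    case True
    have "(\<integral>\<^sup>+ z. ennreal (dist (f z) z) \<partial>\<mu>) = (\<integral>\<^sup>+ z. 0 \<partial>\<mu>)"
      using dist_d[unfolded True] by (intro nn_integral_cong) (metis dist_le_zero_iff dist_self ennreal_0)
    then show ?thesis using True assms(5) by simp
  next
    case False
    then have dpos: "d > 0" using dge by simp
    define c where "c z = \<epsilon> * indicator X' z + d * indicator (- X') z" for z
    have X'c: "- X' \<in> sets \<mu>" using X'm sets.compl_sets[OF X'm] sp by (simp add: Compl_eq_Diff_UNIV)
    have ci: "integrable \<mu> c" unfolding c_def using X'm X'c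
      by (auto simp: P.emeasure_eq_measure)
    have "(\<integral>\<^sup>+ z. ennreal (dist (f z) z) \<partial>\<mu>) \<le> (\<integral>\<^sup>+ z. ennreal (c z) \<partial>\<mu>)"
      by (intro nn_integral_mono ennreal_leI) (auto simp: c_def dist_d fX' less_imp_le split: split_indicator)
    also have "\<dots> = ennreal (integral\<^sup>L \<mu> c)"
      by (rule nn_integral_eq_integral[OF ci]) (use assms(5) dge in \<open>auto simp: c_def\<close>)
    also have "integral\<^sup>L \<mu> c = \<epsilon> * measure \<mu> X' + d * (1 - measure \<mu> X')"
    proof -
      have "measure \<mu> (- X') = 1 - measure \<mu> X'" using P.prob_compl[OF X'm] sp by (simp add: Compl_eq_Diff_UNIV)
      moreover have i1: "integrable \<mu> (\<lambda>z. \<epsilon> * indicator X' z :: real)" using X'm by (auto simp: P.emeasure_eq_measure)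
      moreover have i2: "integrable \<mu> (\<lambda>z. d * indicator (- X') z :: real)" using X'c by (auto simp: P.emeasure_eq_measure)
      ultimately show ?thesis unfolding c_def Bochner_Integration.integral_add[OF i1 i2] using X'm X'c
        by (simp add: sp)
    qed
    also have "ennreal (\<epsilon> * measure \<mu> X' + d * (1 - measure \<mu> X')) < ennreal ((d + 1) * \<epsilon>)"
    proof (rule ennreal_lessI)
      show "0 < (d + 1) * \<epsilon>" using dge assms(5) by simp
      have "\<epsilon> * measure \<mu> X' \<le> \<epsilon>" using assms(5) P.prob_le_1 by (simp add: mult_left_le)
      moreover have "d * (1 - measure \<mu> X') < d * \<epsilon>" using dpos X'meas by simp
      ultimately show "\<epsilon> * measure \<mu> X' + d * (1 - measure \<mu> X') < (d + 1) * \<epsilon>"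
        by (simp add: algebra_simps)
    qed
    finally show ?thesis .
  qed
  finally have kant: "kantorovich (pmf_to_borel p) \<mu> < ennreal ((d + 1) * \<epsilon>)" .
  have "H_eps \<mu> ((d + 1) * \<epsilon>) \<le> ereal (pmf_entropy p)"
    unfolding H_eps_def using ent kant by (intro INF_lower) simp
  also have "\<dots> \<le> ereal (ln (real k))" using ent by simp
  finally show "H_eps \<mu> ((diameter (UNIV :: 'a set) + 1) * \<epsilon>) \<le> ereal (ln (real k))"
    unfolding d_def .
qed

end
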